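(* Let $\mathcal{B}$ be an operator algebra. Suppose that $\tau\colon\mathcal{B}\to \mathbf{B}(\widetilde{\mathcal{H}})$ is $\Phi$-maximal (respectively $\Phi_r$-maximal), that the homomorphism $\rho\colon\mathcal{B}\to \mathbf{B}(\mathcal{H})$ lies in $\Phi(\mathcal{B})$ (respectively in $\Phi_r(\mathcal{B})$), and that $\tau$ dilates $\rho$, i.e. $\mathcal{H}\subseteq \widetilde{\mathcal{H}}$ and $\rho(b) = P_{\mathcal{H}}\tau(b)|_{\mathcal{H}}$ for all $b\in \mathcal{B}$, where $P_{\mathcal{H}}$ is the orthogonal projection onto $\mathcal{H}$. Then $\tau(\mathcal{B}_\rho)$ leaves $\mathcal{H}$ invariant.
   Context: For a linear map $\phi$ between operator algebras, $\|\phi\|_{cb}=\sup_n\|\mathrm{id}_{M_n}\otimes\phi\|$. $\Phi(\mathcal{B})$ is the set of injective homomorphisms $\phi$ from $\mathcal{B}$ onto an operator algebra $\mathcal{C}\subseteq\mathbf{B}(\mathcal{K})$ (some Hilbert space $\mathcal{K}$) with $\|\phi\|_{cb}<\infty$ and $\|\phi^{-1}\|_{cb}<\infty$; $\Phi_r(\mathcal{B})$ is the subset with $\|\phi\|_{cb}\le r$ and $\|\phi^{-1}\|_{cb}\le r$. For such $\phi$ with image $\mathcal{C}$, $\mathcal{B}_\phi=\phi^{-1}(\mathcal{C}\cap\mathcal{C}^* )$, $\mathcal{C}^*$ being the set of adjoints. A map $\tau\in\Phi(\mathcal{B})$ (resp. $\tau\in\Phi_r(\mathcal{B})$) is $\Phi$-maximal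 (resp. $\Phi_r$-maximal) if $\mathcal{B}_\tau$ is maximal with respect to inclusion in the family $\{\mathcal{B}_\chi:\chi\in\Phi(\mathcal{B})\}$ (resp. $\{\mathcal{B}_\chi:\chi\in\Phi_r(\mathcal{B})\}$). *)

theory Defs
  imports "HOL-Analysis.Analysis"
begin

class complex_vector = real_vector +
  fixes scaleC :: "complex \<Rightarrow> 'a \<Rightarrow> 'a"
  assumes scaleC_add_right: "scaleC a (x + y) = scaleC a x + scaleC a y"
    and scaleC_add_left: "scaleC (a + b) x = scaleC a x + scaleC b x"
    and scaleC_scaleC: "scaleC a (scaleC b x) = scaleC (a * b) x"
    and scaleC_one: "scaleC 1 x = x"
    and scaleR_scaleC: "scaleR r x = scaleC (complex_of_real r) x"

text \<open>Complex inner product (linear in the second argument); the real inner product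
  (hence norm, metric and topology) is its real part.\<close>
class complex_inner = complex_vector + real_inner +
  fixes cinner :: "'a \<Rightarrow> 'a \<Rightarrow> complex"
  assumes cinner_cnj_commute: "cinner x y = cnj (cinner y x)"
    and cinner_add_right: "cinner x (y + z) = cinner x y + cinner x z"
    and cinner_scaleC_right: "cinner x (scaleC a y) = a * cinner x y"
    and inner_eq_Re_cinner: "inner x y = Re (cinner x y)"

class chilbert = complex_inner + complete_space

text \<open>Hilbert spaces are modelled as closed complex subspaces of an ambient Hilbert space type.\<close>
definition csubspace :: "'a::complex_vector set \<Rightarrow> bool" where
  "csubspace S \<longleftrightarrow> 0 \<in> S \<and> (\<forall>x\<in>S. \<forall>y\<in>S. x + y \<in> S) \<and> (\<forall>c. \<forall>x\<in>S. scaleC c x \<in> S)"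

definition hilbert_subspace :: "'a::chilbert set \<Rightarrow> bool" where
  "hilbert_subspace S \<longleftrightarrow> csubspace S \<and> closed S"

definition proj :: "'a::chilbert set \<Rightarrow> 'a \<Rightarrow> 'a" where
  "proj H x = (THE y. y \<in> H \<and> (\<forall>z\<in>H. cinner z (x - y) = 0))"

text \<open>\<open>bop H\<close> = B(H): bounded complex-linear operators on H, represented as functions
  on the ambient type that vanish outside H (so that operator equality is function equality).\<close>
definition bop :: "'a::chilbert set \<Rightarrow> ('a \<Rightarrow> 'a) set" where
  "bop H = {T. (\<forall>x\<in>H. T x \<in> H) \<and> (\<forall>x\<in>H. \<forall>y\<in>H. T (x + y) = T x + T y)
     \<and> (\<forall>c. \<forall>x\<in>H. T (scaleC c x) = scaleC c (T x))
     \<and> (\<exists>M. \<forall>x\<in>H. norm (T x) \<le> M * norm x) \<and> (\<forall>x. x \<notin> H \<longrightarrow> T x = 0)}"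

definition opnorm :: "'a::chilbert set \<Rightarrow> ('a \<Rightarrow> 'a) \<Rightarrow> real" where
  "opnorm H T = Sup ((\<lambda>x. norm (T x)) ` {x \<in> H. norm x \<le> 1})"

definition is_adjoint :: "'a::chilbert set \<Rightarrow> ('a \<Rightarrow> 'a) \<Rightarrow> ('a \<Rightarrow> 'a) \<Rightarrow> bool" where
  "is_adjoint H T S \<longleftrightarrow> S \<in> bop H \<and> (\<forall>x\<in>H. \<forall>y\<in>H. cinner (T x) y = cinner x (S y))"

definition adjoints :: "'a::chilbert set \<Rightarrow> ('a \<Rightarrow> 'a) set \<Rightarrow> ('a \<Rightarrow> 'a) set" where
  "adjoints H C = {S. \<exists>T\<in>C. is_adjoint H T S}"

definition op_algebra :: "'a::chilbert set \<Rightarrow> ('a \<Rightarrow> 'a) set \<Rightarrow> bool" where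
  "op_algebra H A \<longleftrightarrow> hilbert_subspace H \<and> A \<subseteq> bop H \<and> (\<lambda>x. 0) \<in> A
     \<and> (\<forall>S\<in>A. \<forall>T\<in>A. (\<lambda>x. S x + T x) \<in> A)
     \<and> (\<forall>c. \<forall>T\<in>A. (\<lambda>x. scaleC c (T x)) \<in> A)
     \<and> (\<forall>S\<in>A. \<forall>T\<in>A. S \<circ> T \<in> A)
     \<and> (\<forall>T\<in>bop H. (\<forall>e>0. \<exists>S\<in>A. opnorm H (\<lambda>x. T x - S x) < e) \<longrightarrow> T \<in> A)"

text \<open>Norm of an n x n operator matrix T = [T i j] (i,j < n) as an operator on H^n.\<close>
definition mnorm :: "'a::chilbert set \<Rightarrow> nat \<Rightarrow> (nat \<Rightarrow> nat \<Rightarrow> 'a \<Rightarrow> 'a) \<Rightarrow> real" where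
  "mnorm H n T = Sup ((\<lambda>x. sqrt (\<Sum>i<n. (norm (\<Sum>j<n. T i j (x j)))\<^sup>2))
     ` {x. (\<forall>j<n. x j \<in> H) \<and> (\<Sum>j<n. (norm (x j))\<^sup>2) \<le> 1})"

definition mats :: "nat \<Rightarrow> 'b set \<Rightarrow> (nat \<Rightarrow> nat \<Rightarrow> 'b) set" where
  "mats n A = {b. \<forall>i<n. \<forall>j<n. b i j \<in> A}"

text \<open>Completely bounded norm of f : A \<subseteq> B(H) \<rightarrow> B(K):
  sup over n of the norm of id_{M_n} \<otimes> f (possibly infinite).\<close>
definition cbnorm :: "'a::chilbert set \<Rightarrow> ('a \<Rightarrow> 'a) set \<Rightarrow> 'k::chilbert set
    \<Rightarrow> (('a \<Rightarrow> 'a) \<Rightarrow> ('k \<Rightarrow> 'k)) \<Rightarrow> ereal" where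
  "cbnorm H A K f = (SUP n. SUP b \<in> {b \<in> mats n A. mnorm H n b \<le> 1}.
      ereal (mnorm K n (\<lambda>i j. f (b i j))))"

definition hom_on :: "('a::chilbert \<Rightarrow> 'a) set \<Rightarrow> 'k::chilbert set
    \<Rightarrow> (('a \<Rightarrow> 'a) \<Rightarrow> ('k \<Rightarrow> 'k)) \<Rightarrow> bool" where
  "hom_on A K f \<longleftrightarrow> (\<forall>a\<in>A. f a \<in> bop K)
     \<and> (\<forall>a\<in>A. \<forall>b\<in>A. f (\<lambda>x. a x + b x) = (\<lambda>y. f a y + f b y))
     \<and> (\<forall>c. \<forall>a\<in>A. f (\<lambda>x. scaleC c (a x)) = (\<lambda>y. scaleC c (f a y)))
     \<and> (\<forall>a\<in>A. \<forall>b\<in>A. f (a \<circ> b) = f a \<circ> f b)"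

text \<open>\<Phi>(B): pairs (K, \<phi>) with \<phi> an injective homomorphism of B onto an operator algebra
  C \<subseteq> B(K), K a Hilbert space (closed subspace of the ambient type 'k), with
  \<parallel>\<phi>\<parallel>_cb < \<infinity> and \<parallel>\<phi>^{-1}\<parallel>_cb < \<infinity>.\<close>
definition Phi :: "'a::chilbert set \<Rightarrow> ('a \<Rightarrow> 'a) set
    \<Rightarrow> ('k::chilbert set \<times> (('a \<Rightarrow> 'a) \<Rightarrow> ('k \<Rightarrow> 'k))) set" where
  "Phi H0 B = {(K, \<phi>). hilbert_subspace K \<and> hom_on B K \<phi> \<and> inj_on \<phi> B
      \<and> op_algebra K (\<phi> ` B)
      \<and> cbnorm H0 B K \<phi> < \<infinity> \<and> cbnorm K (\<phi> ` B) H0 (inv_into B \<phi>) < \<infinity>}"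

definition Phi_r :: "real \<Rightarrow> 'a::chilbert set \<Rightarrow> ('a \<Rightarrow> 'a) set
    \<Rightarrow> ('k::chilbert set \<times> (('a \<Rightarrow> 'a) \<Rightarrow> ('k \<Rightarrow> 'k))) set" where
  "Phi_r r H0 B = {(K, \<phi>) \<in> Phi H0 B. cbnorm H0 B K \<phi> \<le> ereal r
      \<and> cbnorm K (\<phi> ` B) H0 (inv_into B \<phi>) \<le> ereal r}"

text \<open>B_\<phi> = \<phi>^{-1}(C \<inter> C^*) where C = \<phi>(B) \<subseteq> B(K).\<close>
definition Bphi :: "('a::chilbert \<Rightarrow> 'a) set \<Rightarrow> 'k::chilbert set
    \<Rightarrow> (('a \<Rightarrow> 'a) \<Rightarrow> ('k \<Rightarrow> 'k)) \<Rightarrow> ('a \<Rightarrow> 'a) set" where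
  "Bphi B K \<phi> = {b \<in> B. \<phi> b \<in> \<phi> ` B \<inter> adjoints K (\<phi> ` B)}"

definition maximal_in :: "('k::chilbert set \<times> (('a::chilbert \<Rightarrow> 'a) \<Rightarrow> ('k \<Rightarrow> 'k))) set
    \<Rightarrow> ('a \<Rightarrow> 'a) set \<Rightarrow> 'k set \<Rightarrow> (('a \<Rightarrow> 'a) \<Rightarrow> ('k \<Rightarrow> 'k)) \<Rightarrow> bool" where
  "maximal_in F B K \<tau> \<longleftrightarrow> (K, \<tau>) \<in> F \<and> (\<forall>K' \<kappa>. (K', \<kappa>) \<in> F \<longrightarrow> \<not> (Bphi B K \<tau> \<subset> Bphi B K' \<kappa>))"

definition dilates :: "('a::chilbert \<Rightarrow> 'a) set \<Rightarrow> 'k::chilbert set \<Rightarrow> (('a \<Rightarrow> 'a) \<Rightarrow> ('k \<Rightarrow> 'k))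
    \<Rightarrow> 'k set \<Rightarrow> (('a \<Rightarrow> 'a) \<Rightarrow> ('k \<Rightarrow> 'k)) \<Rightarrow> bool" where
  "dilates B Ht \<tau> H \<rho> \<longleftrightarrow> H \<subseteq> Ht
     \<and> (\<forall>b\<in>B. \<rho> b = (\<lambda>x. if x \<in> H then proj H (\<tau> b x) else 0))"

end

theory Submission
  imports Defs
begin


lemma parallelogram_real:
  fixes a b :: "'a::real_inner"
  shows "(norm (a+b))\<^sup>2 + (norm (a-b))\<^sup>2 = 2*(norm a)\<^sup>2 + 2*(norm b)\<^sup>2"
  by (simp add: power2_norm_eq_inner inner_add_left inner_add_right inner_diff_left inner_diff_right inner_commute)

lemma real_proj_exists:
  fixes S :: "'a::{real_inner,complete_space} set"
  assumes cl: "closed S" and z0: "0 \<in> S" and add: "\<And>x y. x\<in>S \<Longrightarrow> y\<in>S \<Longrightarrow> x+y\<in>S"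
    and sc: "\<And>c x. x\<in>S \<Longrightarrow> scaleR c x \<in> S"
  shows "\<exists>y\<in>S. \<forall>w\<in>S. inner w (z - y) = 0"
proof -
  define D where "D = (\<lambda>y. norm (z - y)) ` S"
  define d where "d = Inf D"
  have Dne: "D \<noteq> {}" using z0 by (auto simp: D_def)
  have Dbdd: "bdd_below D" unfolding D_def by (rule bdd_belowI[of _ 0]) auto
  have dle: "d \<le> norm (z - y)" if "y \<in> S" for y
    unfolding d_def using Dbdd that by (auto simp: D_def intro!: cInf_lower)
  have d0: "0 \<le> d" unfolding d_def using Dne by (auto simp: D_def intro!: cInf_greatest)
  have "\<exists>y\<in>S. (norm (z - y))\<^sup>2 < d\<^sup>2 + 1 / real (Suc n)" for n
  proof -
    have "d < sqrt (d\<^sup>2 + 1 / real (Suc n))"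
    proof -
      have "sqrt (d\<^sup>2) < sqrt (d\<^sup>2 + 1 / real (Suc n))"
        by (rule real_sqrt_less_mono) simp
      then show ?thesis using d0 by simp
    qed
    then obtain t where "t \<in> D" "t < sqrt (d\<^sup>2 + 1 / real (Suc n))"
      using cInf_lessD[OF Dne] unfolding d_def by blast
    then obtain y where y: "y \<in> S" "norm (z - y) < sqrt (d\<^sup>2 + 1 / real (Suc n))"
      by (auto simp: D_def)
    then have "(norm (z - y))\<^sup>2 < d\<^sup>2 + 1 / real (Suc n)"
    proof -
      have "(norm (z - y))\<^sup>2 < (sqrt (d\<^sup>2 + 1 / real (Suc n)))\<^sup>2"
        using y(2) by (intro power_strict_mono) auto
      then show ?thesis by simp
    qed
    then show ?thesis using y by blast
  qed
  then obtain Y where Y: "\<And>n. Y n \<in> S" "\<And>n. (norm (z - Y n))\<^sup>2 < d\<^sup>2 + 1 / real (Suc n)"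
    by metis
  have bound: "(norm (Y m - Y n))\<^sup>2 \<le> 2 / real (Suc m) + 2 / real (Suc n)" for m n
  proof -
    have mid: "scaleR (1/2) (Y m + Y n) \<in> S" using Y add sc by blast
    have "d \<le> norm (z - scaleR (1/2) (Y m + Y n))" using dle[OF mid] .
    then have "d\<^sup>2 \<le> (norm (z - scaleR (1/2) (Y m + Y n)))\<^sup>2"
      using d0 by (simp add: power_mono)
    moreover have "(z - Y m) + (z - Y n) = scaleR 2 (z - scaleR (1/2) (Y m + Y n))"
      by (simp add: algebra_simps scaleR_2)
    then have "(norm ((z - Y m) + (z - Y n)))\<^sup>2 = 4 * (norm (z - scaleR (1/2) (Y m + Y n)))\<^sup>2"
      by (simp add: power_mult_distrib)
    moreover have "(z - Y m) - (z - Y n) = Y n - Y m" by simp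
    then have "(norm ((z - Y m) - (z - Y n)))\<^sup>2 = (norm (Y m - Y n))\<^sup>2" by (metis norm_minus_commute)
    ultimately have "(norm (Y m - Y n))\<^sup>2 \<le> 2*(norm (z - Y m))\<^sup>2 + 2*(norm (z - Y n))\<^sup>2 - 4 * d\<^sup>2"
      using parallelogram_real[of "z - Y m" "z - Y n"] by linarith
    then show ?thesis using Y(2)[of m] Y(2)[of n] by linarith
  qed
  have "Cauchy Y"
  proof (rule metric_CauchyI)
    fix e :: real assume e: "e > 0"
    obtain M where M: "4 / e\<^sup>2 < real M" using reals_Archimedean2 by blast
    show "\<exists>M. \<forall>m\<ge>M. \<forall>n\<ge>M. dist (Y m) (Y n) < e"
    proof (intro exI allI impI)
      fix m n assume mn: "M \<le> m" "M \<le> n"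
      have e2: "e\<^sup>2 > 0" using e by simp
      have "4 / e\<^sup>2 < real (Suc m)" using M mn by linarith
      then have a: "2 / real (Suc m) < e\<^sup>2 / 2" using e2 by (simp add: field_simps)
      have "4 / e\<^sup>2 < real (Suc n)" using M mn by linarith
      then have b: "2 / real (Suc n) < e\<^sup>2 / 2" using e2 by (simp add: field_simps)
      have "(norm (Y m - Y n))\<^sup>2 < e\<^sup>2" using bound[of m n] a b by linarith
      then have "norm (Y m - Y n) < e" using e power_less_imp_less_base[of "norm (Y m - Y n)" 2 e] by simp
      then show "dist (Y m) (Y n) < e" by (simp add: dist_norm)
    qed
  qed
  then obtain y where lim: "Y \<longlonglongrightarrow> y" using Cauchy_convergent_iff convergent_def by blast
  have yS: "y \<in> S" using closed_sequentially[OF cl] Y(1) lim by blast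
  have l1: "(\<lambda>n. (norm (z - Y n))\<^sup>2) \<longlonglongrightarrow> (norm (z - y))\<^sup>2"
    by (intro tendsto_intros lim)
  have l2: "(\<lambda>n. d\<^sup>2 + 1 / real (Suc n)) \<longlonglongrightarrow> d\<^sup>2 + 0"
    by (intro tendsto_intros LIMSEQ_Suc[OF lim_inverse_n'] )
  have "\<forall>n\<ge>0. (norm (z - Y n))\<^sup>2 \<le> d\<^sup>2 + 1 / real (Suc n)"
    using Y(2) less_imp_le by blast
  then have "(norm (z - y))\<^sup>2 \<le> d\<^sup>2 + 0"
    by (intro LIMSEQ_le[OF l1 l2]) blast
  then have ymin: "(norm (z - y))\<^sup>2 \<le> d\<^sup>2" by simp
  have best: "(norm (z - y))\<^sup>2 \<le> (norm (z - w))\<^sup>2" if "w \<in> S" for w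
    using ymin dle[OF that] d0 by (smt (verit) power_mono)
  show ?thesis
  proof (intro bexI[OF _ yS] ballI)
    fix w assume w: "w \<in> S"
    define a where "a = inner w (z - y)"
    define N where "N = (norm w)\<^sup>2"
    have N0: "N \<ge> 0" by (simp add: N_def)
    have ineq: "2 * t * a \<le> t\<^sup>2 * N" for t
    proof -
      have "y + scaleR t w \<in> S" using add sc yS w by blast
      from best[OF this] have h: "(norm (z - y))\<^sup>2 \<le> (norm ((z - y) - scaleR t w))\<^sup>2"
        by (simp add: algebra_simps)
      have id: "(norm ((z - y) - scaleR t w))\<^sup>2 = (norm (z - y))\<^sup>2 - 2 * t * a + t\<^sup>2 * N"
        unfolding a_def N_def power2_norm_eq_inner by (simp add: inner_diff_left inner_diff_right inner_commute algebra_simps power2_eq_square)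
      show ?thesis using h id by linarith
    qed
    show "inner w (z - y) = 0"
    proof (rule ccontr)
      assume "inner w (z - y) \<noteq> 0"
      then have a2: "a\<^sup>2 > 0" by (simp add: a_def)
      have "2 * (a / (N+1)) * a \<le> (a/(N+1))\<^sup>2 * N" by (rule ineq)
      then have k: "2 * (a / (N+1)) * a * (N+1)\<^sup>2 \<le> (a/(N+1))\<^sup>2 * N * (N+1)\<^sup>2"
        by (rule mult_right_mono) simp
      have N1: "N + 1 \<noteq> 0" using N0 by simp
      have l: "2 * (a / (N+1)) * a * (N+1)\<^sup>2 = 2 * a\<^sup>2 * (N+1)"
        using N1 by (simp add: field_simps power2_eq_square)
      have q: "a/(N+1) * (N+1) = a" using N1 by simp
      then have q2: "(a/(N+1))\<^sup>2 * (N+1)\<^sup>2 = a\<^sup>2" by (metis power_mult_distrib)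
      have "(a/(N+1))\<^sup>2 * N * (N+1)\<^sup>2 = ((a/(N+1))\<^sup>2 * (N+1)\<^sup>2) * N" by (simp add: ac_simps)
      then have r: "(a/(N+1))\<^sup>2 * N * (N+1)\<^sup>2 = a\<^sup>2 * N" using q2 by simp
      have "2 * a\<^sup>2 * (N+1) \<le> a\<^sup>2 * N" using k l r by simp
      moreover have "2 * a\<^sup>2 * (N+1) = 2 * (a\<^sup>2 * N) + 2 * a\<^sup>2" by (simp add: algebra_simps)
      moreover have "a\<^sup>2 * N \<ge> 0" using N0 by simp
      ultimately show False using a2 by linarith
    qed
  qed
qed


lemma cinner_diff_right: "cinner (x::'a::complex_inner) (a - b) = cinner x a - cinner x b"
  by (metis add_diff_cancel cinner_add_right diff_add_cancel)

lemma cinner_diff_left: "cinner (a - b) (x::'a::complex_inner) = cinner a x - cinner b x"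
  by (metis cinner_cnj_commute cinner_diff_right complex_cnj_diff)

lemma cinner_scaleC_left: "cinner (scaleC c x) (y::'a::complex_inner) = cnj c * cinner x y"
  by (metis cinner_cnj_commute cinner_scaleC_right complex_cnj_mult complex_cnj_cnj)

lemma hs_real:
  fixes H :: "'a::chilbert set"
  assumes "hilbert_subspace H"
  shows "closed H" "0 \<in> H" "\<And>x y. x\<in>H \<Longrightarrow> y\<in>H \<Longrightarrow> x+y\<in>H" "\<And>c x. x\<in>H \<Longrightarrow> scaleR c x \<in> H"
    "\<And>c x. x\<in>H \<Longrightarrow> scaleC c x \<in> H"
  using assms by (auto simp: hilbert_subspace_def csubspace_def scaleR_scaleC)

lemma orth_real_to_complex:
  fixes H :: "'a::chilbert set"
  assumes "hilbert_subspace H" and o: "\<forall>w\<in>H. inner w v = 0" and w: "w \<in> H"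
  shows "cinner w v = 0"
proof -
  have "scaleC \<i> w \<in> H" using hs_real(5)[OF assms(1) w] .
  then have "Re (cinner (scaleC \<i> w) v) = 0" using o by (simp add: inner_eq_Re_cinner)
  then have "Im (cinner w v) = 0" by (simp add: cinner_scaleC_left)
  moreover have "Re (cinner w v) = 0" using o w by (simp add: inner_eq_Re_cinner)
  ultimately show ?thesis by (simp add: complex_eq_iff)
qed

lemma proj_props:
  fixes H :: "'a::chilbert set"
  assumes hs: "hilbert_subspace H"
  shows "proj H z \<in> H \<and> (\<forall>w\<in>H. cinner w (z - proj H z) = 0)"
proof -
  obtain y where y: "y \<in> H" "\<forall>w\<in>H. inner w (z - y) = 0"
    using real_proj_exists[OF hs_real(1-4)[OF hs]] by blast
  have ex: "y \<in> H \<and> (\<forall>w\<in>H. cinner w (z - y) = 0)"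
    using y orth_real_to_complex[OF hs] by blast
  have uniq: "y' = y" if "y' \<in> H \<and> (\<forall>w\<in>H. cinner w (z - y') = 0)" for y'
  proof -
    have "scaleR (-1) y \<in> H" using hs_real(4)[OF hs] y(1) by blast
    then have "y' + scaleR (-1) y \<in> H" using hs_real(3)[OF hs] that by blast
    then have m: "y' - y \<in> H" by simp
    have a: "inner (y' - y) (z - y) = 0" using y m by blast
    have b: "inner (y' - y) (z - y') = 0" using that m by (simp add: inner_eq_Re_cinner)
    have "inner (y' - y) (y' - y) = 0"
      using a b by (simp add: inner_diff_right algebra_simps)
    then show ?thesis by simp
  qed
  show ?thesis unfolding proj_def
    by (rule theI[where a=y]) (use ex uniq in blast)+
qed

lemma proj_left:
  fixes H :: "'a::chilbert set"
  assumes hs: "hilbert_subspace H" and x: "x \<in> H"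
  shows "cinner x (proj H z) = cinner x z"
  using proj_props[OF hs, of z] x by (simp add: cinner_diff_right)

lemma proj_right:
  fixes H :: "'a::chilbert set"
  assumes hs: "hilbert_subspace H" and x: "x \<in> H"
  shows "cinner (proj H z) x = cinner z x"
  using proj_left[OF hs x, of z] by (metis cinner_cnj_commute)

lemma step1:
  assumes dil: "dilates B Ht \<tau> H \<rho>" and homr: "hom_on B H \<rho>" and hs: "hilbert_subspace H"
  shows "Bphi B Ht \<tau> \<subseteq> Bphi B H \<rho>"
proof
  fix b assume "b \<in> Bphi B Ht \<tau>"
  then obtain c where b: "b \<in> B" and c: "c \<in> B" and adj: "is_adjoint Ht (\<tau> c) (\<tau> b)"
    by (auto simp: Bphi_def adjoints_def)
  have HHt: "H \<subseteq> Ht" and rf: "\<And>a. a \<in> B \<Longrightarrow> \<rho> a = (\<lambda>x. if x \<in> H then proj H (\<tau> a x) else 0)"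
    using dil by (auto simp: dilates_def)
  have "is_adjoint H (\<rho> c) (\<rho> b)"
    unfolding is_adjoint_def
  proof (intro conjI ballI)
    show "\<rho> b \<in> bop H" using homr b by (simp add: hom_on_def)
    fix x y assume x: "x \<in> H" and y: "y \<in> H"
    have "cinner (\<rho> c x) y = cinner (\<tau> c x) y"
      using rf[OF c] x proj_right[OF hs y] by simp
    also have "\<dots> = cinner x (\<tau> b y)"
      using adj x y HHt by (auto simp: is_adjoint_def)
    also have "\<dots> = cinner x (\<rho> b y)"
      using rf[OF b] y proj_left[OF hs x] by simp
    finally show "cinner (\<rho> c x) y = cinner x (\<rho> b y)" .
  qed
  then show "b \<in> Bphi B H \<rho>" using b c by (auto simp: Bphi_def adjoints_def)
qed

lemma core:
  assumes alg: "op_algebra H0 B" and dil: "dilates B Ht \<tau> H \<rho>"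
    and homt: "hom_on B Ht \<tau>" and homr: "hom_on B H \<rho>" and hs: "hilbert_subspace H"
    and sub: "Bphi B H \<rho> \<subseteq> Bphi B Ht \<tau>"
  shows "\<forall>b\<in>Bphi B H \<rho>. \<forall>x\<in>H. \<tau> b x \<in> H"
proof (intro ballI)
  fix b x assume bB: "b \<in> Bphi B H \<rho>" and x: "x \<in> H"
  then have "b \<in> Bphi B Ht \<tau>" using sub by blast
  then obtain c where b: "b \<in> B" and c: "c \<in> B" and adj: "is_adjoint Ht (\<tau> c) (\<tau> b)"
    by (auto simp: Bphi_def adjoints_def)
  have HHt: "H \<subseteq> Ht" and rf: "\<And>a. a \<in> B \<Longrightarrow> \<rho> a = (\<lambda>x. if x \<in> H then proj H (\<tau> a x) else 0)"
    using dil by (auto simp: dilates_def)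
  have cb: "c \<circ> b \<in> B" using alg b c by (simp add: op_algebra_def)
  have tcb: "\<tau> (c \<circ> b) = \<tau> c \<circ> \<tau> b" using homt b c by (simp add: hom_on_def)
  have rcb: "\<rho> (c \<circ> b) = \<rho> c \<circ> \<rho> b" using homr b c by (simp add: hom_on_def)
  define v where "v = \<tau> b x"
  define p where "p = proj H v"
  have vHt: "v \<in> Ht" using homt b x HHt unfolding v_def hom_on_def bop_def by blast
  have pH: "p \<in> H" using proj_props[OF hs] p_def by blast
  have "\<rho> (c \<circ> b) x = \<rho> c (\<rho> b x)" using rcb by simp
  then have eq: "proj H (\<tau> c v) = proj H (\<tau> c p)"
    using rf[OF cb] rf[OF c] rf[OF b] x pH tcb by (simp add: v_def p_def)
  have sa: "\<And>u w. u \<in> Ht \<Longrightarrow> w \<in> Ht \<Longrightarrow> cinner (\<tau> c u) w = cinner u (\<tau> b w)"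
    using adj by (simp add: is_adjoint_def)
  have xHt: "x \<in> Ht" using x HHt by blast
  have pHt: "p \<in> Ht" using pH HHt by blast
  have "cinner x (proj H (\<tau> c v)) = cinner x (\<tau> c v)" by (rule proj_left[OF hs x])
  also have "\<dots> = cnj (cinner (\<tau> c v) x)" by (rule cinner_cnj_commute)
  also have "\<dots> = cnj (cinner v v)" using sa[OF vHt xHt] v_def by simp
  finally have f1: "cinner x (proj H (\<tau> c v)) = cnj (cinner v v)" .
  have "cinner x (proj H (\<tau> c p)) = cinner x (\<tau> c p)" by (rule proj_left[OF hs x])
  also have "\<dots> = cnj (cinner (\<tau> c p) x)" by (rule cinner_cnj_commute)
  also have "\<dots> = cnj (cinner p v)" using sa[OF pHt xHt] v_def by simp
  finally have f2: "cinner x (proj H (\<tau> c p)) = cnj (cinner p v)" .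
  note f1 moreover note f2
  ultimately have e1: "cinner v v = cinner p v" using eq by simp
  have "cinner p (v - p) = 0" using proj_props[OF hs, of v] pH p_def by blast
  then have e2: "cinner p v = cinner p p" by (simp add: cinner_diff_right)
  have "inner (v - p) (v - p) = inner v v - 2 * inner p v + inner p p"
    by (simp add: inner_diff_left inner_diff_right inner_commute)
  also have "\<dots> = 0" using e1 e2 by (simp add: inner_eq_Re_cinner)
  finally have "v = p" by simp
  then show "\<tau> b x \<in> H" using pH v_def by simp
qed

lemma gen:
  assumes alg: "op_algebra H0 B" and dil: "dilates B Ht \<tau> H \<rho>"
    and F: "F \<subseteq> Phi H0 B" and max: "maximal_in F B Ht \<tau>" and r: "(H, \<rho>) \<in> F"
  shows "\<forall>b\<in>Bphi B H \<rho>. \<forall>x\<in>H. \<tau> b x \<in> H"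
proof -
  have t: "(Ht, \<tau>) \<in> Phi H0 B" using max F by (auto simp: maximal_in_def)
  have r': "(H, \<rho>) \<in> Phi H0 B" using r F by auto
  have homt: "hom_on B Ht \<tau>" using t by (simp add: Phi_def)
  have homr: "hom_on B H \<rho>" and hs: "hilbert_subspace H" using r' by (auto simp: Phi_def)
  have s1: "Bphi B Ht \<tau> \<subseteq> Bphi B H \<rho>" by (rule step1[OF dil homr hs])
  have "\<not> (Bphi B Ht \<tau> \<subset> Bphi B H \<rho>)" using max r by (auto simp: maximal_in_def)
  with s1 have "Bphi B H \<rho> \<subseteq> Bphi B Ht \<tau>" by blast
  then show ?thesis by (rule core[OF alg dil homt homr hs])
qed

theorem proposition7:
  fixes H0 :: "'a::chilbert set" and B :: "('a \<Rightarrow> 'a) set"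
    and Ht H :: "'k::chilbert set" and \<tau> \<rho> :: "('a \<Rightarrow> 'a) \<Rightarrow> ('k \<Rightarrow> 'k)"
  assumes "op_algebra H0 B"
    and "dilates B Ht \<tau> H \<rho>"
  shows "(maximal_in (Phi H0 B) B Ht \<tau> \<and> (H, \<rho>) \<in> Phi H0 B
            \<longrightarrow> (\<forall>b\<in>Bphi B H \<rho>. \<forall>x\<in>H. \<tau> b x \<in> H))
       \<and> (\<forall>r. maximal_in (Phi_r r H0 B) B Ht \<tau> \<and> (H, \<rho>) \<in> Phi_r r H0 B
            \<longrightarrow> (\<forall>b\<in>Bphi B H \<rho>. \<forall>x\<in>H. \<tau> b x \<in> H))"
proof (intro conjI impI allI)
  assume "maximal_in (Phi H0 B) B Ht \<tau> \<and> (H, \<rho>) \<in> Phi H0 B"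
  then show "\<forall>b\<in>Bphi B H \<rho>. \<forall>x\<in>H. \<tau> b x \<in> H"
    using gen[OF assms, of "Phi H0 B"] by blast
next
  fix r assume "maximal_in (Phi_r r H0 B) B Ht \<tau> \<and> (H, \<rho>) \<in> Phi_r r H0 B"
  moreover have "Phi_r r H0 B \<subseteq> Phi H0 B" by (auto simp: Phi_r_def)
  ultimately show "\<forall>b\<in>Bphi B H \<rho>. \<forall>x\<in>H. \<tau> b x \<in> H"
    using gen[OF assms, of "Phi_r r H0 B"] by blast
qed

end
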